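(* Assume $r\ge2$, let $F:(\mathbb{R}^n,D)\to(\mathbb{R}^n,D)$ be an $\eta$-quasisymmetric homeomorphism, and write $F(x,y)=(H(x,y),G(y))$ for $x\in\mathbb{R}^{n_1}$, $y\in Y$, where $G:Y\to Y$ and $H:\mathbb{R}^{n_1}\times Y\to\mathbb{R}^{n_1}$ (such maps exist since $F$ maps each horizontal leaf $\mathbb{R}^{n_1}\times\{y\}$ onto a horizontal leaf). Then for all $y\in Y$ and $x\in\mathbb{R}^{n_1}$: (1) $L_G(y,\rho)\le\eta(1)\,l_{H(\cdot,y)}(x,\rho)$ for every $\rho>0$; (2) $\eta^{-1}(1)\,l_{H(\cdot,y)}(x)\le l_G(y)\le\eta(1)\,l_{H(\cdot,y)}(x)$; (3) $\eta^{-1}(1)\,L_{H(\cdot,y)}(x)\le L_G(y)\le\eta(1)\,L_{H(\cdot,y)}(x)$. Here quantities for $G$ are computed with respect to $D_Y$ and quantities for $H(\cdot,y)$ with respect to the Euclidean metric on $\mathbb{R}^{n_1}$.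
   Context: Let $n_1,\dots,n_r\ge1$, $n=n_1+\dots+n_r$, $0<\alpha_1<\dots<\alpha_r$. For $x=(x_1,\dots,x_r)\in\mathbb{R}^n=\mathbb{R}^{n_1}\times\dots\times\mathbb{R}^{n_r}$, $D(x,y)=\max\{|x_1-y_1|,|x_2-y_2|^{\alpha_1/\alpha_2},\dots,|x_r-y_r|^{\alpha_1/\alpha_r}\}$. Set $Y=\mathbb{R}^{n_2}\times\dots\times\mathbb{R}^{n_r}$, so $\mathbb{R}^n=\mathbb{R}^{n_1}\times Y$, with $D_Y((x_2,\dots,x_r),(x_2',\dots,x_r'))=\max_{2\le i\le r}|x_i-x_i'|^{\alpha_1/\alpha_i}$. $\eta:[0,\infty)\to[0,\infty)$ is a homeomorphism; $f$ is $\eta$-quasisymmetric if $\frac{d(f(x),f(y))}{d(f(x),f(z))}\le\eta(\frac{d(x,y)}{d(x,z)})$ for distinct $x,y,z$. For a homeomorphism $g$ of metric spaces, $x$ in the domain and $\rho>0$: $L_g(x,\rho)=\sup\{d(g(x),g(x')):d(x,x')\le\rho\}$, $l_g(x,\rho)=\inf\{d(g(x),g(x')):d(x,x')\ge\rho\}$, $L_g(x)=\limsup_{\rho\to0}L_g(x,\rho)/\rho$, $l_g(x)=\liminf_{\rho\to0}l_g(x,\rho)/\rho$. *)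

theory Defs
  imports "HOL-Analysis.Analysis"
begin

text \<open>Blocks: a vector of R^m is a function nat => real vanishing from index m on.
  A point of R^n = R^{n_1} x ... x R^{n_r} is a function nat => (nat => real);
  block i (0-based, i < r) lies in R^{nn i}, blocks i >= r vanish.
  The paper's index k (1..r) corresponds to our i = k - 1.\<close>

definition Rsp :: "nat \<Rightarrow> (nat \<Rightarrow> real) set" where
  "Rsp m = {v. \<forall>j\<ge>m. v j = 0}"

definition bnorm :: "nat \<Rightarrow> (nat \<Rightarrow> real) \<Rightarrow> real" where
  "bnorm m v = sqrt (\<Sum>j<m. (v j)\<^sup>2)"

definition edist :: "nat \<Rightarrow> (nat \<Rightarrow> real) \<Rightarrow> (nat \<Rightarrow> real) \<Rightarrow> real" where
  "edist m u v = bnorm m (u - v)"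

definition PSp :: "nat \<Rightarrow> (nat \<Rightarrow> nat) \<Rightarrow> (nat \<Rightarrow> nat \<Rightarrow> real) set" where
  "PSp r nn = {x. (\<forall>i<r. x i \<in> Rsp (nn i)) \<and> (\<forall>i\<ge>r. x i = (\<lambda>_. 0))}"

definition Dmet :: "nat \<Rightarrow> (nat \<Rightarrow> nat) \<Rightarrow> (nat \<Rightarrow> real) \<Rightarrow>
    (nat \<Rightarrow> nat \<Rightarrow> real) \<Rightarrow> (nat \<Rightarrow> nat \<Rightarrow> real) \<Rightarrow> real" where
  "Dmet r nn \<alpha> x y = Max ((\<lambda>i. bnorm (nn i) (x i - y i) powr (\<alpha> 0 / \<alpha> i)) ` {..<r})"

text \<open>Y = R^{n_2} x ... x R^{n_r}: points of R^n whose first block is zero.\<close>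
definition YSp :: "nat \<Rightarrow> (nat \<Rightarrow> nat) \<Rightarrow> (nat \<Rightarrow> nat \<Rightarrow> real) set" where
  "YSp r nn = {y \<in> PSp r nn. y 0 = (\<lambda>_. 0)}"

definition DYmet :: "nat \<Rightarrow> (nat \<Rightarrow> nat) \<Rightarrow> (nat \<Rightarrow> real) \<Rightarrow>
    (nat \<Rightarrow> nat \<Rightarrow> real) \<Rightarrow> (nat \<Rightarrow> nat \<Rightarrow> real) \<Rightarrow> real" where
  "DYmet r nn \<alpha> x y = Max ((\<lambda>i. bnorm (nn i) (x i - y i) powr (\<alpha> 0 / \<alpha> i)) ` {1..<r})"

definition quasisymmetric_on ::
  "'a set \<Rightarrow> ('a \<Rightarrow> 'a \<Rightarrow> real) \<Rightarrow> ('b \<Rightarrow> 'b \<Rightarrow> real) \<Rightarrow> (real \<Rightarrow> real) \<Rightarrow> ('a \<Rightarrow> 'b) \<Rightarrow> bool" where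
  "quasisymmetric_on A d d' \<eta> f \<longleftrightarrow>
     (\<forall>x\<in>A. \<forall>y\<in>A. \<forall>z\<in>A. x \<noteq> y \<and> x \<noteq> z \<and> y \<noteq> z \<longrightarrow>
        d' (f x) (f y) / d' (f x) (f z) \<le> \<eta> (d x y / d x z))"

definition Lrad ::
  "'a set \<Rightarrow> ('a \<Rightarrow> 'a \<Rightarrow> real) \<Rightarrow> ('b \<Rightarrow> 'b \<Rightarrow> real) \<Rightarrow> ('a \<Rightarrow> 'b) \<Rightarrow> 'a \<Rightarrow> real \<Rightarrow> ereal" where
  "Lrad A d d' g x \<rho> = Sup {ereal (d' (g x) (g x')) | x'. x' \<in> A \<and> d x x' \<le> \<rho>}"

definition lrad ::
  "'a set \<Rightarrow> ('a \<Rightarrow> 'a \<Rightarrow> real) \<Rightarrow> ('b \<Rightarrow> 'b \<Rightarrow> real) \<Rightarrow> ('a \<Rightarrow> 'b) \<Rightarrow> 'a \<Rightarrow> real \<Rightarrow> ereal" where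
  "lrad A d d' g x \<rho> = Inf {ereal (d' (g x) (g x')) | x'. x' \<in> A \<and> d x x' \<ge> \<rho>}"

definition Lpt ::
  "'a set \<Rightarrow> ('a \<Rightarrow> 'a \<Rightarrow> real) \<Rightarrow> ('b \<Rightarrow> 'b \<Rightarrow> real) \<Rightarrow> ('a \<Rightarrow> 'b) \<Rightarrow> 'a \<Rightarrow> ereal" where
  "Lpt A d d' g x = Limsup (at_right 0) (\<lambda>\<rho>. Lrad A d d' g x \<rho> / ereal \<rho>)"

definition lpt ::
  "'a set \<Rightarrow> ('a \<Rightarrow> 'a \<Rightarrow> real) \<Rightarrow> ('b \<Rightarrow> 'b \<Rightarrow> real) \<Rightarrow> ('a \<Rightarrow> 'b) \<Rightarrow> 'a \<Rightarrow> ereal" where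
  "lpt A d d' g x = Liminf (at_right 0) (\<lambda>\<rho>. lrad A d d' g x \<rho> / ereal \<rho>)"

end

theory Submission
  imports Defs "HOL-Homology.Invariance_of_Domain"
begin


lemma bnorm_nonneg: "bnorm m v \<ge> 0"
  by (simp add: bnorm_def sum_nonneg)

lemma bnorm_zero[simp]: "bnorm m (\<lambda>_. 0) = 0"
  by (simp add: bnorm_def)

lemma bnorm_comm: "bnorm m (u - v) = bnorm m (v - u)"
  unfolding bnorm_def by (simp add: power2_commute)

lemma bnorm_pos:
  assumes "u \<in> Rsp m" "v \<in> Rsp m" "u \<noteq> v" shows "bnorm m (u - v) > 0"
proof -
  obtain j where j: "u j \<noteq> v j" using assms(3) by auto
  have "j < m" using assms j unfolding Rsp_def by (metis (mono_tags, lifting) mem_Collect_eq not_le)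
  have "(u j - v j)\<^sup>2 \<le> (\<Sum>i<m. (u i - v i)\<^sup>2)"
    using \<open>j<m\<close> by (intro member_le_sum) auto
  moreover have "(u j - v j)\<^sup>2 > 0" using j by simp
  ultimately have "(\<Sum>i<m. (u i - v i)\<^sup>2) > 0" by linarith
  then show ?thesis unfolding bnorm_def by simp
qed

lemma bnorm_coord: "j < m \<Longrightarrow> \<bar>v j\<bar> \<le> bnorm m v"
proof -
  assume "j < m"
  have "(v j)\<^sup>2 \<le> (\<Sum>i<m. (v i)\<^sup>2)"
    using \<open>j<m\<close> by (intro member_le_sum) auto
  then show ?thesis unfolding bnorm_def
    by (metis real_sqrt_abs real_sqrt_le_iff)
qed

definition e0 :: "real \<Rightarrow> nat \<Rightarrow> real" where "e0 t = (\<lambda>j. if j = 0 then t else 0)"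

lemma e0_Rsp: "m \<ge> 1 \<Longrightarrow> e0 t \<in> Rsp m"
  by (auto simp: e0_def Rsp_def)

lemma bnorm_e0: "m \<ge> 1 \<Longrightarrow> bnorm m (e0 t) = \<bar>t\<bar>"
proof -
  assume "m \<ge> 1"
  have "(\<Sum>i<m. (e0 t i)\<^sup>2) = (\<Sum>i\<in>{0}. (e0 t i)\<^sup>2)"
    by (rule sum.mono_neutral_right) (use \<open>m\<ge>1\<close> in \<open>auto simp: e0_def\<close>)
  then show ?thesis by (simp add: bnorm_def e0_def)
qed

lemma exact_R:
  assumes "m \<ge> 1" "x \<in> Rsp m" "t \<ge> 0"
  shows "(\<lambda>j. x j + e0 t j) \<in> Rsp m \<and> edist m x (\<lambda>j. x j + e0 t j) = t"
proof -
  have "x - (\<lambda>j. x j + e0 t j) = (\<lambda>j. e0 (-t) j)" by (auto simp: e0_def fun_diff_def)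
  then show ?thesis using assms bnorm_e0[of m "-t"] e0_Rsp[of m t]
    by (auto simp: Rsp_def edist_def)
qed




lemma fun_diff_self[simp]: "(f::nat\<Rightarrow>real) - f = (\<lambda>_. 0)"
  by (auto simp: fun_diff_def)

lemma D_block0:
  assumes "r \<ge> 1" "\<alpha> 0 > 0" "\<forall>i\<in>{1..<r}. p i = q i"
  shows "Dmet r nn \<alpha> p q = bnorm (nn 0) (p 0 - q 0)"
  unfolding Dmet_def
proof (rule Max_eqI)
  show "finite ((\<lambda>i. bnorm (nn i) (p i - q i) powr (\<alpha> 0 / \<alpha> i)) ` {..<r})" by simp
  show "bnorm (nn 0) (p 0 - q 0) \<in> (\<lambda>i. bnorm (nn i) (p i - q i) powr (\<alpha> 0 / \<alpha> i)) ` {..<r}"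
    using assms by (auto intro!: image_eqI[of _ _ 0] simp: powr_one bnorm_nonneg)
  fix z assume "z \<in> (\<lambda>i. bnorm (nn i) (p i - q i) powr (\<alpha> 0 / \<alpha> i)) ` {..<r}"
  then obtain i where i: "i < r" "z = bnorm (nn i) (p i - q i) powr (\<alpha> 0 / \<alpha> i)" by auto
  show "z \<le> bnorm (nn 0) (p 0 - q 0)"
  proof (cases "i = 0")
    case True then show ?thesis using i assms by (simp add: powr_one bnorm_nonneg)
  next
    case False then have "p i = q i" using assms i by auto
    then show ?thesis using i by (simp add: bnorm_nonneg)
  qed
qed

lemma DY_nonneg: "r \<ge> 2 \<Longrightarrow> DYmet r nn \<alpha> p q \<ge> 0"
  unfolding DYmet_def
  by (rule order.trans[OF _ Max_ge[where x="bnorm (nn 1) (p 1 - q 1) powr (\<alpha> 0 / \<alpha> 1)"]]) auto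

lemma DY_le_D: "r \<ge> 2 \<Longrightarrow> DYmet r nn \<alpha> p q \<le> Dmet r nn \<alpha> p q"
  unfolding DYmet_def Dmet_def
  by (rule Max_mono) auto

lemma D_eq_DY:
  assumes "r \<ge> 2" "p 0 = q 0"
  shows "Dmet r nn \<alpha> p q = DYmet r nn \<alpha> p q"
proof -
  let ?f = "\<lambda>i. bnorm (nn i) (p i - q i) powr (\<alpha> 0 / \<alpha> i)"
  have ne: "?f ` {1..<r} \<noteq> {}" using assms by auto
  have mem: "Max (?f ` {1..<r}) \<in> ?f ` {1..<r}" by (rule Max_in) (use ne in auto)
  show ?thesis unfolding Dmet_def DYmet_def
  proof (rule Max_eqI)
    show "finite (?f ` {..<r})" by simp
    show "Max (?f ` {1..<r}) \<in> ?f ` {..<r}" using mem by auto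
    fix z assume "z \<in> ?f ` {..<r}"
    then obtain i where i: "i < r" "z = ?f i" by auto
    show "z \<le> Max (?f ` {1..<r})"
    proof (cases "i = 0")
      case True then show ?thesis using i assms DY_nonneg[of r nn \<alpha> p q] by (simp add: DYmet_def)
    next
      case False then show ?thesis using i by (intro Max_ge) auto
    qed
  qed
qed

lemma DY_cong:
  assumes "\<forall>i\<in>{1..<r}. p i = p' i \<and> q i = q' i"
  shows "DYmet r nn \<alpha> p q = DYmet r nn \<alpha> p' q'"
  unfolding DYmet_def using assms by (intro arg_cong[where f=Max] image_cong) auto

lemma DY_zero:
  assumes "r \<ge> 2" "\<forall>i\<in>{1..<r}. p i = q i"
  shows "DYmet r nn \<alpha> p q = 0"
  unfolding DYmet_def
proof (rule Max_eqI)
  show "finite ((\<lambda>i. bnorm (nn i) (p i - q i) powr (\<alpha> 0 / \<alpha> i)) ` {1..<r})" by simp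
  show "0 \<in> (\<lambda>i. bnorm (nn i) (p i - q i) powr (\<alpha> 0 / \<alpha> i)) ` {1..<r}"
    using assms by (auto intro!: image_eqI[of _ _ 1])
qed (use assms in auto)

lemma DY_pos:
  assumes "r \<ge> 2" "i \<in> {1..<r}" "p i \<in> Rsp (nn i)" "q i \<in> Rsp (nn i)" "p i \<noteq> q i"
  shows "DYmet r nn \<alpha> p q > 0"
proof -
  have "0 < bnorm (nn i) (p i - q i) powr (\<alpha> 0 / \<alpha> i)"
    using bnorm_pos[OF assms(3,4,5)] by simp
  also have "\<dots> \<le> DYmet r nn \<alpha> p q" unfolding DYmet_def using assms by (intro Max_ge) auto
  finally show ?thesis .
qed

lemma exact_Y:
  assumes r: "r \<ge> 2" and nn: "\<forall>i<r. nn i \<ge> 1" and a0: "\<alpha> 0 > 0" and a1: "\<alpha> 1 > 0"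
    and y: "y \<in> YSp r nn" and rho: "\<rho> \<ge> 0"
  shows "\<exists>y'\<in>YSp r nn. DYmet r nn \<alpha> y y' = \<rho>"
proof -
  define t where "t = \<rho> powr (\<alpha> 1 / \<alpha> 0)"
  define y' where "y' = y(1 := (\<lambda>j. y 1 j + e0 t j))"
  have n1: "nn 1 \<ge> 1" using nn r by auto
  have ex: "(\<lambda>j. y 1 j + e0 t j) \<in> Rsp (nn 1) \<and> edist (nn 1) (y 1) (\<lambda>j. y 1 j + e0 t j) = t"
    using y r exact_R[OF n1, of "y 1" t] unfolding YSp_def PSp_def t_def by auto
  have "y' \<in> YSp r nn" using y ex r unfolding YSp_def PSp_def y'_def by auto
  moreover have "DYmet r nn \<alpha> y y' = \<rho>"
    unfolding DYmet_def
  proof (rule Max_eqI)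
    show "finite ((\<lambda>i. bnorm (nn i) (y i - y' i) powr (\<alpha> 0 / \<alpha> i)) ` {1..<r})" by simp
    have "bnorm (nn 1) (y 1 - y' 1) = t" using ex by (simp add: y'_def edist_def)
    then have "bnorm (nn 1) (y 1 - y' 1) powr (\<alpha> 0 / \<alpha> 1) = \<rho>"
      using a0 a1 rho by (simp add: t_def powr_powr)
    then show "\<rho> \<in> (\<lambda>i. bnorm (nn i) (y i - y' i) powr (\<alpha> 0 / \<alpha> i)) ` {1..<r}"
      using r by (auto intro!: image_eqI[of _ _ 1])
    fix z assume "z \<in> (\<lambda>i. bnorm (nn i) (y i - y' i) powr (\<alpha> 0 / \<alpha> i)) ` {1..<r}"
    then obtain i where i: "i \<in> {1..<r}" "z = bnorm (nn i) (y i - y' i) powr (\<alpha> 0 / \<alpha> i)" by auto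
    show "z \<le> \<rho>"
    proof (cases "i = 1")
      case True then show ?thesis using i \<open>bnorm (nn 1) (y 1 - y' 1) powr (\<alpha> 0 / \<alpha> 1) = \<rho>\<close> by simp
    next
      case False then have "y i = y' i" by (simp add: y'_def)
      then show ?thesis using i rho by simp
    qed
  qed
  ultimately show ?thesis by blast
qed






lemma eta_facts:
  fixes \<eta> \<eta>inv :: "real \<Rightarrow> real"
  assumes h: "homeomorphism {0..} {0..} \<eta> \<eta>inv"
  shows "strict_mono_on {0..} \<eta>" and "\<eta> 0 = 0" and "\<eta> (\<eta>inv 1) = 1" and "\<eta>inv 1 > 0"
    and "\<And>s t. 0 \<le> s \<Longrightarrow> s \<le> t \<Longrightarrow> \<eta> s \<le> \<eta> t" and "\<eta> 1 > 0"
    and "\<And>\<epsilon>. \<epsilon> > 0 \<Longrightarrow> \<exists>\<delta>>0. \<forall>t. 0 \<le> t \<and> t < \<delta> \<longrightarrow> \<eta> t < \<epsilon>"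
proof -
  have H: "(\<forall>x\<in>{0::real..}. \<eta>inv (\<eta> x) = x) \<and> \<eta> ` {0..} = {0..} \<and> continuous_on {0..} \<eta> \<and>
      (\<forall>y\<in>{0::real..}. \<eta> (\<eta>inv y) = y) \<and> \<eta>inv ` {0..} = {0..} \<and> continuous_on {0..} \<eta>inv"
    using h unfolding homeomorphism_def by blast
  then have A1: "\<forall>x\<in>{0::real..}. \<eta>inv (\<eta> x) = x" and img: "\<eta> ` {0..} = {0..}"
    and cont: "continuous_on {0..} \<eta>" and A2: "\<forall>y\<in>{0::real..}. \<eta> (\<eta>inv y) = y"
    and img2: "\<eta>inv ` {0..} = {0..}" by blast+
  have inv1: "\<And>x. x \<ge> 0 \<Longrightarrow> \<eta>inv (\<eta> x) = x" using A1 by (meson atLeast_iff)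
  have inv2: "\<And>y. y \<ge> 0 \<Longrightarrow> \<eta> (\<eta>inv y) = y" using A2 by (meson atLeast_iff)
  have inj: "inj_on \<eta> {0..}"
  proof (rule inj_onI)
    fix x y assume "x \<in> {0..}" "y \<in> {0..}" "\<eta> x = \<eta> y"
    then show "x = y" by (metis inv1 atLeast_iff)
  qed
  have "strict_mono_on {0..} \<eta> \<or> strict_antimono_on {0..} \<eta>"
  proof -
    have "is_interval {0::real..}" by (simp add: is_interval_ci)
    from injective_eq_monotone_map[OF this cont] inj show ?thesis by blast
  qed
  moreover have "\<not> strict_antimono_on {0..} \<eta>"
  proof
    assume a: "strict_antimono_on {0..} \<eta>"
    have "\<eta> 0 \<in> \<eta> ` {0..}" by simp
    then have "\<eta> 0 \<ge> 0" unfolding img by simp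
    then have "\<eta> 0 + 1 \<in> \<eta> ` {0..}" unfolding img by simp
    then obtain t where t: "t \<ge> 0" "\<eta> t = \<eta> 0 + 1" by (metis imageE atLeast_iff)
    show False
    proof (cases "t = 0")
      case True then show ?thesis using t by simp
    next
      case False
      have M: "\<forall>x\<in>{0..}. \<forall>y\<in>{0..}. x < y \<longrightarrow> \<eta> y < \<eta> x" using a by (simp add: monotone_on_def)
      have "\<eta> t < \<eta> 0" using M[rule_format, of 0 t] t False by simp
      then show ?thesis using t by simp
    qed
  qed
  ultimately show sm: "strict_mono_on {0..} \<eta>" by blast
  show mono: "\<And>s t. 0 \<le> s \<Longrightarrow> s \<le> t \<Longrightarrow> \<eta> s \<le> \<eta> t"
  proof -
    fix s t :: real assume st: "0 \<le> s" "s \<le> t"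
    show "\<eta> s \<le> \<eta> t"
    proof (cases "s = t")
      case False then have "s < t" using st by simp
      then show ?thesis using strict_mono_onD[OF sm, of s t] st by simp
    qed simp
  qed
  have "0 \<in> \<eta> ` {0..}" unfolding img by simp
  then obtain t0 where t0: "t0 \<ge> 0" "\<eta> t0 = 0" by (metis imageE atLeast_iff)
  have "\<eta> 0 \<in> \<eta> ` {0..}" by simp
  then have "\<eta> 0 \<ge> 0" unfolding img by simp
  then show e0: "\<eta> 0 = 0" using mono[of 0 t0] t0 by linarith
  show "\<eta> (\<eta>inv 1) = 1" using inv2 by simp
  have "\<eta>inv 1 \<in> \<eta>inv ` {0..}" by simp
  then have "\<eta>inv 1 \<ge> 0" unfolding img2 by simp
  moreover have "\<eta>inv 1 \<noteq> 0" using inv2[of 1] e0 by force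
  ultimately show "\<eta>inv 1 > 0" by simp
  show "\<eta> 1 > 0" using strict_mono_onD[OF sm, of 0 1] e0 by simp
  fix \<epsilon> :: real assume "\<epsilon> > 0"
  have "\<forall>x\<in>{0..}. \<forall>e>0. \<exists>d>0. \<forall>x'\<in>{0..}. dist x' x < d \<longrightarrow> dist (\<eta> x') (\<eta> x) < e"
    using cont by (simp only: continuous_on_iff)
  then have C0: "\<forall>e>0. \<exists>d>0. \<forall>x'\<in>{0..}. dist x' 0 < d \<longrightarrow> dist (\<eta> x') (\<eta> 0) < e"
    by (rule bspec) simp
  obtain \<delta> where d: "\<delta> > 0" "\<forall>x'\<in>{0..}. dist x' 0 < \<delta> \<longrightarrow> dist (\<eta> x') (\<eta> 0) < \<epsilon>"
    using C0 \<open>\<epsilon> > 0\<close> by blast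
  show "\<exists>\<delta>>0. \<forall>t. 0 \<le> t \<and> t < \<delta> \<longrightarrow> \<eta> t < \<epsilon>"
  proof (intro exI[of _ \<delta>] conjI allI impI)
    fix t :: real assume "0 \<le> t \<and> t < \<delta>"
    then show "\<eta> t < \<epsilon>" using d(2)[rule_format, of t] e0 by (simp add: dist_real_def)
  qed (rule d(1))
qed


lemma powr_subadd:
  fixes s t b :: real
  assumes "s \<ge> 0" "t \<ge> 0" "0 < b" "b \<le> 1"
  shows "(s + t) powr b \<le> s powr b + t powr b"
proof (cases "s + t = 0")
  case True then show ?thesis using assms by simp
next
  case False
  then have st: "s + t > 0" using assms by simp
  define a where "a = s / (s + t)"
  define c where "c = t / (s + t)"
  have a: "0 \<le> a" "a \<le> 1" and c: "0 \<le> c" "c \<le> 1" and ac: "a + c = 1"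
    using assms st by (auto simp: a_def c_def add_divide_distrib[symmetric])
  have "a \<le> a powr b" using powr_mono'[of b 1 a] a assms by (simp add: powr_one)
  moreover have "c \<le> c powr b" using powr_mono'[of b 1 c] c assms by (simp add: powr_one)
  ultimately have "1 \<le> a powr b + c powr b" using ac by simp
  then have "(s + t) powr b * 1 \<le> (s + t) powr b * (a powr b + c powr b)"
    by (intro mult_left_mono) auto
  also have "\<dots> = ((s+t) * a) powr b + ((s+t) * c) powr b"
    using a c st by (simp add: powr_mult distrib_left)
  also have "\<dots> = s powr b + t powr b" using st by (simp add: a_def c_def)
  finally show ?thesis by simp
qed

lemma bnorm_tri: "bnorm m (a - c) \<le> bnorm m (a - b) + bnorm m (b - c)"
proof -
  have "bnorm m v = L2_set v {..<m}" for v unfolding bnorm_def L2_set_def by simp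
  moreover have "L2_set (\<lambda>i. (a - b) i + (b - c) i) {..<m} \<le> L2_set (a - b) {..<m} + L2_set (b - c) {..<m}"
    by (rule L2_set_triangle_ineq)
  moreover have "(\<lambda>i. (a - b) i + (b - c) i) = a - c" by (auto simp: fun_diff_def)
  ultimately show ?thesis by simp
qed

lemma bnorm_eq0: "u \<in> Rsp m \<Longrightarrow> v \<in> Rsp m \<Longrightarrow> bnorm m (u - v) = 0 \<Longrightarrow> u = v"
  using bnorm_pos by fastforce

lemma Dmet_metric:
  assumes r: "r \<ge> 1" and a0: "\<alpha> 0 > 0" and am: "strict_mono_on {..<r} \<alpha>"
  shows "Metric_space (PSp r nn) (Dmet r nn \<alpha>)"
proof
  have apos: "\<And>i. i < r \<Longrightarrow> \<alpha> 0 \<le> \<alpha> i"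
  proof -
    fix i assume i: "i < r"
    show "\<alpha> 0 \<le> \<alpha> i"
    proof (cases "i = 0")
      case False then show ?thesis using strict_mono_onD[OF am, of 0 i] i by simp
    qed simp
  qed
  let ?t = "\<lambda>x y i. bnorm (nn i) (x i - y i) powr (\<alpha> 0 / \<alpha> i)"
  have fin: "finite (?t x y ` {..<r})" and ne: "?t x y ` {..<r} \<noteq> {}" for x y using r by (auto simp: lessThan_empty_iff)
  have ge: "\<And>x y i. i < r \<Longrightarrow> ?t x y i \<le> Dmet r nn \<alpha> x y"
    unfolding Dmet_def by (intro Max_ge) auto
  fix x y z :: "nat \<Rightarrow> nat \<Rightarrow> real"
  have "0 \<le> bnorm (nn 0) (x 0 - y 0) powr (\<alpha> 0 / \<alpha> 0)" by simp
  then show "0 \<le> Dmet r nn \<alpha> x y" using ge[of 0 x y] r by linarith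
  show "Dmet r nn \<alpha> x y = Dmet r nn \<alpha> y x" unfolding Dmet_def by (simp add: bnorm_comm)
  show "x \<in> PSp r nn \<Longrightarrow> y \<in> PSp r nn \<Longrightarrow> (Dmet r nn \<alpha> x y = 0) = (x = y)"
  proof
    assume xy: "x \<in> PSp r nn" "y \<in> PSp r nn" "Dmet r nn \<alpha> x y = 0"
    have "x i = y i" for i
    proof (cases "i < r")
      case True
      then have "?t x y i \<le> 0" using ge[of i x y] xy by simp
      then have "bnorm (nn i) (x i - y i) = 0" using bnorm_nonneg[of "nn i" "x i - y i"]
        by (cases "bnorm (nn i) (x i - y i) = 0") auto
      then show ?thesis using bnorm_eq0 xy True unfolding PSp_def by blast
    next
      case False then show ?thesis using xy unfolding PSp_def by auto
    qed
    then show "x = y" by auto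
  next
    assume "x = y"
    then show "Dmet r nn \<alpha> x y = 0" unfolding Dmet_def
      using r by (intro Max_eqI) (auto intro!: image_eqI[of _ _ 0])
  qed
  assume "x \<in> PSp r nn" "y \<in> PSp r nn" "z \<in> PSp r nn"
  have "?t x z i \<le> Dmet r nn \<alpha> x y + Dmet r nn \<alpha> y z" if i: "i < r" for i
  proof -
    have b: "0 < \<alpha> 0 / \<alpha> i" "\<alpha> 0 / \<alpha> i \<le> 1" using apos[OF i] a0 by auto
    have "?t x z i \<le> (bnorm (nn i) (x i - y i) + bnorm (nn i) (y i - z i)) powr (\<alpha> 0 / \<alpha> i)"
      using b by (intro powr_mono2 bnorm_tri) (auto simp: bnorm_nonneg)
    also have "\<dots> \<le> ?t x y i + ?t y z i" using b by (intro powr_subadd) (auto simp: bnorm_nonneg)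
    also have "\<dots> \<le> Dmet r nn \<alpha> x y + Dmet r nn \<alpha> y z" using ge[OF i] by (intro add_mono)
    finally show ?thesis .
  qed
  then show "Dmet r nn \<alpha> x z \<le> Dmet r nn \<alpha> x y + Dmet r nn \<alpha> y z"
    unfolding Dmet_def[of r nn \<alpha> x z] using r by (subst Max_le_iff) (auto simp: lessThan_empty_iff)
qed

lemma topspace_mtop:
  "Metric_space M d \<Longrightarrow> topspace (Metric_space.mtopology M d) = M"
  by (rule Metric_space.topspace_mtopology)




lemma coord_cont: "continuous_map (Euclidean_space m) euclideanreal (\<lambda>x. x j)"
  unfolding Euclidean_space_def
  by (rule continuous_map_from_subtopology, rule continuous_map_product_projection) simp

lemma Rsp_topspace: "topspace (Euclidean_space m) = Rsp m"
  by (simp add: topspace_Euclidean_space Rsp_def)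

lemma openin_eball:
  assumes "\<delta> > 0"
  shows "openin (Euclidean_space m) {u' \<in> Rsp m. edist m u u' < \<delta>}"
proof -
  let ?f = "\<lambda>u'. \<Sum>j<m. (u j - u' j) * (u j - u' j)"
  have cm: "continuous_map (Euclidean_space m) euclideanreal ?f"
    by (intro continuous_map_sum continuous_map_real_mult continuous_map_diff coord_cont continuous_map_const[THEN iffD2]) auto
  have "openin (Euclidean_space m) {x \<in> topspace (Euclidean_space m). ?f x \<in> {..<\<delta>^2}}"
    by (rule openin_continuous_map_preimage[OF cm]) simp
  moreover have "edist m u u' < \<delta> \<longleftrightarrow> ?f u' < \<delta>^2" for u'
  proof -
    have "edist m u u' = sqrt (?f u')" by (simp add: edist_def bnorm_def power2_eq_square fun_diff_def)
    moreover have "\<delta> = sqrt (\<delta>^2)" using assms by simp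
    ultimately show ?thesis by (metis real_sqrt_less_iff)
  qed
  ultimately show ?thesis by (simp add: Rsp_topspace)
qed

lemma cont_Euclid:
  assumes hmap: "\<forall>u\<in>Rsp m. h u \<in> Rsp m"
    and hc: "\<forall>u\<in>Rsp m. \<forall>\<epsilon>>0. \<exists>\<delta>>0. \<forall>u'\<in>Rsp m. edist m u u' < \<delta> \<longrightarrow> edist m (h u) (h u') < \<epsilon>"
  shows "continuous_map (Euclidean_space m) (Euclidean_space m) h"
proof -
  have E: "Euclidean_space m = subtopology (powertop_real UNIV) (Rsp m)"
    by (simp add: Euclidean_space_def Rsp_def)
  have "continuous_map (Euclidean_space m) euclideanreal (\<lambda>x. h x k)" for k
    unfolding continuous_map_eq_topcontinuous_at topcontinuous_at_def
  proof (intro ballI conjI allI impI)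
    fix x V assume x: "x \<in> topspace (Euclidean_space m)" and V: "openin euclideanreal V \<and> h x k \<in> V"
    then have xR: "x \<in> Rsp m" by (simp add: Rsp_topspace)
    obtain \<epsilon> where e: "\<epsilon> > 0" "ball (h x k) \<epsilon> \<subseteq> V" using V by (meson open_contains_ball open_openin)
    obtain \<delta> where d: "\<delta> > 0" "\<forall>u'\<in>Rsp m. edist m x u' < \<delta> \<longrightarrow> edist m (h x) (h u') < \<epsilon>"
      using hc xR e by blast
    show "\<exists>U. openin (Euclidean_space m) U \<and> x \<in> U \<and> (\<forall>y\<in>U. h y k \<in> V)"
    proof (intro exI conjI ballI)
      show "openin (Euclidean_space m) {u' \<in> Rsp m. edist m x u' < \<delta>}" by (rule openin_eball[OF d(1)])
      show "x \<in> {u' \<in> Rsp m. edist m x u' < \<delta>}" using xR d by (simp add: edist_def)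
      fix y assume y: "y \<in> {u' \<in> Rsp m. edist m x u' < \<delta>}"
      have "dist (h x k) (h y k) < \<epsilon>"
      proof (cases "k < m")
        case True
        have "\<bar>(h x - h y) k\<bar> \<le> bnorm m (h x - h y)" by (rule bnorm_coord[OF True])
        then show ?thesis using d(2)[rule_format, of y] y by (simp add: dist_real_def edist_def fun_diff_def)
      next
        case False
        then show ?thesis using hmap xR y e by (simp add: Rsp_def)
      qed
      then show "h y k \<in> V" using e by (auto simp: dist_commute)
    qed
  qed (auto)
  then have "continuous_map (Euclidean_space m) (powertop_real UNIV) h"
    by (simp add: continuous_map_componentwise_UNIV)
  then show ?thesis
    by (subst (2) E, subst continuous_map_in_subtopology) (use hmap in \<open>auto simp: Rsp_topspace\<close>)
qed

lemma open_image_Euclid: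
  assumes hmap: "\<forall>u\<in>Rsp m. h u \<in> Rsp m"
    and hc: "\<forall>u\<in>Rsp m. \<forall>\<epsilon>>0. \<exists>\<delta>>0. \<forall>u'\<in>Rsp m. edist m u u' < \<delta> \<longrightarrow> edist m (h u) (h u') < \<epsilon>"
    and inj: "inj_on h (Rsp m)"
  shows "openin (Euclidean_space m) (h ` Rsp m)"
proof -
  have "openin (Euclidean_space m) (h ` topspace (Euclidean_space m))"
    using invariance_of_domain_Euclidean_space[of m "topspace (Euclidean_space m)" h]
      cont_Euclid[OF hmap hc] inj[folded Rsp_topspace] by simp
  then show ?thesis by (simp add: Rsp_topspace)
qed




locale setting =
  fixes r :: nat and nn :: "nat \<Rightarrow> nat" and \<alpha> :: "nat \<Rightarrow> real"
    and \<eta> \<eta>inv :: "real \<Rightarrow> real"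
    and F :: "(nat \<Rightarrow> nat \<Rightarrow> real) \<Rightarrow> (nat \<Rightarrow> nat \<Rightarrow> real)"
    and G :: "(nat \<Rightarrow> nat \<Rightarrow> real) \<Rightarrow> (nat \<Rightarrow> nat \<Rightarrow> real)"
    and H :: "(nat \<Rightarrow> real) \<Rightarrow> (nat \<Rightarrow> nat \<Rightarrow> real) \<Rightarrow> (nat \<Rightarrow> real)"
  assumes r: "r \<ge> 2"
    and nn: "\<forall>i<r. nn i \<ge> 1"
    and \<alpha>pos: "0 < \<alpha> 0"
    and \<alpha>mono: "strict_mono_on {..<r} \<alpha>"
    and \<eta>: "homeomorphism {0..} {0..} \<eta> \<eta>inv"
    and Fhom: "homeomorphic_map (Metric_space.mtopology (PSp r nn) (Dmet r nn \<alpha>))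
                                (Metric_space.mtopology (PSp r nn) (Dmet r nn \<alpha>)) F"
    and Fqs: "quasisymmetric_on (PSp r nn) (Dmet r nn \<alpha>) (Dmet r nn \<alpha>) \<eta> F"
    and Gmap: "\<forall>y\<in>YSp r nn. G y \<in> YSp r nn"
    and Hmap: "\<forall>x\<in>Rsp (nn 0). \<forall>y\<in>YSp r nn. H x y \<in> Rsp (nn 0)"
    and FGH: "\<forall>x\<in>Rsp (nn 0). \<forall>y\<in>YSp r nn. F (y(0 := x)) = (G y)(0 := H x y)"
begin

abbreviation "PP \<equiv> PSp r nn"
abbreviation "YY \<equiv> YSp r nn"
abbreviation "RR \<equiv> Rsp (nn 0)"
abbreviation "DD \<equiv> Dmet r nn \<alpha>"
abbreviation "DY \<equiv> DYmet r nn \<alpha>"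
abbreviation "ee \<equiv> edist (nn 0)"

lemma r1: "r \<ge> 1" using r by simp
lemma m1: "nn 0 \<ge> 1" using nn r by auto
lemma n1: "nn 1 \<ge> 1" using nn r by auto
lemma a1: "\<alpha> 1 > 0"
  using strict_mono_onD[OF \<alpha>mono, of 0 1] r \<alpha>pos by simp

lemma Fbij: "inj_on F PP" "F ` PP = PP"
proof -
  have MS: "Metric_space PP DD" by (rule Dmet_metric[OF r1 \<alpha>pos \<alpha>mono])
  show "inj_on F PP" using homeomorphic_imp_injective_map[OF Fhom] topspace_mtop[OF MS] by simp
  show "F ` PP = PP" using homeomorphic_imp_surjective_map[OF Fhom] topspace_mtop[OF MS] by simp
qed

lemma Y0: "y \<in> YY \<Longrightarrow> y 0 = (\<lambda>_. 0)" by (simp add: YSp_def)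
lemma YP: "y \<in> YY \<Longrightarrow> y \<in> PP" by (simp add: YSp_def)

lemma pt_in: "y \<in> YY \<Longrightarrow> u \<in> RR \<Longrightarrow> y(0:=u) \<in> PP"
  using r by (auto simp: YSp_def PSp_def)

lemma decomp: "p \<in> PP \<Longrightarrow> p(0:=(\<lambda>_. 0)) \<in> YY \<and> p 0 \<in> RR \<and> (p(0:=(\<lambda>_. 0)))(0 := p 0) = p"
  using r by (auto simp: YSp_def PSp_def Rsp_def)

lemma pt_eq: "y \<in> YY \<Longrightarrow> y' \<in> YY \<Longrightarrow> y(0:=u) = y'(0:=u') \<Longrightarrow> y = y' \<and> u = u'"
proof -
  assume a: "y \<in> YY" "y' \<in> YY" "y(0:=u) = y'(0:=u')"
  have "u = u'" using fun_cong[OF a(3), of 0] by simp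
  moreover have "y i = y' i" for i
  proof (cases "i = 0")
    case True then show ?thesis using Y0 a by simp
  next
    case False then show ?thesis using fun_cong[OF a(3), of i] by simp
  qed
  ultimately show ?thesis by auto
qed

lemma FGH': "y \<in> YY \<Longrightarrow> u \<in> RR \<Longrightarrow> F (y(0:=u)) = (G y)(0 := H u y)"
  using FGH by blast

lemma Hinj: "y \<in> YY \<Longrightarrow> u \<in> RR \<Longrightarrow> u' \<in> RR \<Longrightarrow> H u y = H u' y \<Longrightarrow> u = u'"
proof -
  assume a: "y \<in> YY" "u \<in> RR" "u' \<in> RR" "H u y = H u' y"
  have "F (y(0:=u)) = F (y(0:=u'))" using FGH' a by simp
  then have "y(0:=u) = y(0:=u')" using Fbij(1) pt_in a by (meson inj_onD)
  then show "u = u'" using pt_eq a by blast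
qed

lemma Dpq: "DD (y(0:=u)) (y(0:=u')) = ee u u'"
  using D_block0[where r=r and \<alpha>=\<alpha> and p="y(0:=u)" and q="y(0:=u')" and nn=nn] r1 \<alpha>pos
  by (simp add: edist_def)

lemma DFpq: "y \<in> YY \<Longrightarrow> u \<in> RR \<Longrightarrow> u' \<in> RR \<Longrightarrow>
    DD (F (y(0:=u))) (F (y(0:=u'))) = ee (H u y) (H u' y)"
  using FGH'[of y u] FGH'[of y u'] Dpq[of "G y" "H u y" "H u' y"] by simp

lemma Dps: "y \<in> YY \<Longrightarrow> y' \<in> YY \<Longrightarrow> DD (y(0:=u)) (y'(0:=u)) = DY y y'"
  using D_eq_DY[OF r, of "y(0:=u)" "y'(0:=u)" nn \<alpha>] DY_cong[of r "y(0:=u)" y "y'(0:=u)" y' nn \<alpha>]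
  by simp

lemma DYle: "DY y y' \<le> DD (y(0:=u)) (y'(0:=u'))"
  using DY_le_D[OF r, of nn \<alpha> "y(0:=u)" "y'(0:=u')"] DY_cong[of r "y(0:=u)" y "y'(0:=u')" y' nn \<alpha>]
  by simp

lemma DFps: "y \<in> YY \<Longrightarrow> y' \<in> YY \<Longrightarrow> u \<in> RR \<Longrightarrow> u' \<in> RR \<Longrightarrow>
    DY (G y) (G y') \<le> DD (F (y(0:=u))) (F (y'(0:=u')))"
  using FGH'[of y u] FGH'[of y' u'] DYle[of "G y" "G y'" "H u y" "H u' y'"] by simp

lemma DFps_eq: "y \<in> YY \<Longrightarrow> y' \<in> YY \<Longrightarrow> u \<in> RR \<Longrightarrow> u' \<in> RR \<Longrightarrow> H u y = H u' y' \<Longrightarrow>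
    DD (F (y(0:=u))) (F (y'(0:=u'))) = DY (G y) (G y')"
  using FGH'[of y u] FGH'[of y' u'] Dps[of "G y" "G y'" "H u y"] Gmap by simp

lemma ee_pos: "u \<in> RR \<Longrightarrow> v \<in> RR \<Longrightarrow> u \<noteq> v \<Longrightarrow> ee u v > 0"
  by (simp add: edist_def bnorm_pos)

lemma ee_self[simp]: "ee u u = 0" by (simp add: edist_def)
lemma ee_nonneg: "ee u v \<ge> 0" by (simp add: edist_def bnorm_nonneg)

lemma qs: "p \<in> PP \<Longrightarrow> q \<in> PP \<Longrightarrow> s \<in> PP \<Longrightarrow> p \<noteq> q \<Longrightarrow> p \<noteq> s \<Longrightarrow> q \<noteq> s \<Longrightarrow>
    DD (F p) (F q) / DD (F p) (F s) \<le> \<eta> (DD p q / DD p s)"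
  using Fqs unfolding quasisymmetric_on_def by blast

lemma Hcont:
  assumes z: "z \<in> YY" and u: "u \<in> RR" and e: "\<epsilon> > 0"
  shows "\<exists>\<delta>>0. \<forall>u'\<in>RR. ee u u' < \<delta> \<longrightarrow> ee (H u z) (H u' z) < \<epsilon>"
proof -
  define u1 where "u1 = (\<lambda>j. u j + e0 1 j)"
  have u1: "u1 \<in> RR" "ee u u1 = 1" using exact_R[OF m1 u, of 1] by (auto simp: u1_def)
  have uu1: "u \<noteq> u1" using u1 by auto
  define c where "c = ee (H u z) (H u1 z)"
  have c: "c > 0" unfolding c_def
    using ee_pos[of "H u z" "H u1 z"] Hmap z u u1 Hinj[OF z u u1(1)] uu1 by auto
  obtain \<delta>0 where d0: "\<delta>0 > 0" "\<forall>t. 0 \<le> t \<and> t < \<delta>0 \<longrightarrow> \<eta> t < \<epsilon> / c"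
    using eta_facts(7)[OF \<eta>, of "\<epsilon> / c"] e c by auto
  show ?thesis
  proof (intro exI[of _ "min \<delta>0 (1/2)"] conjI ballI impI)
    show "min \<delta>0 (1/2) > 0" using d0 by simp
    fix u' assume u': "u' \<in> RR" and lt: "ee u u' < min \<delta>0 (1/2)"
    show "ee (H u z) (H u' z) < \<epsilon>"
    proof (cases "u' = u")
      case True then show ?thesis using e by simp
    next
      case False
      have "u' \<noteq> u1" using lt u1 by auto
      let ?p = "z(0:=u)" and ?q = "z(0:=u')" and ?s = "z(0:=u1)"
      have ne: "?p \<noteq> ?q" "?p \<noteq> ?s" "?q \<noteq> ?s"
        using False uu1 \<open>u' \<noteq> u1\<close> by (auto dest: fun_cong[of _ _ 0])
      have "DD (F ?p) (F ?q) / DD (F ?p) (F ?s) \<le> \<eta> (DD ?p ?q / DD ?p ?s)"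
        by (rule qs) (use pt_in z u u' u1 ne in auto)
      then have "ee (H u z) (H u' z) / c \<le> \<eta> (ee u u')"
        using DFpq[OF z u u'] DFpq[OF z u u1(1)] Dpq[of z u u'] Dpq[of z u u1] u1 by (simp add: c_def)
      also have "\<dots> < \<epsilon> / c" using d0 lt ee_nonneg[of u u'] by auto
      finally show ?thesis using c by (simp add: divide_less_cancel)
    qed
  qed
qed

lemma Hsurj:
  assumes y': "y' \<in> YY" and w: "w \<in> RR"
  shows "\<exists>x''\<in>RR. H x'' y' = w"
proof -
  let ?E = "Euclidean_space (nn 0)"
  have opn: "openin ?E ((\<lambda>u. H u z) ` RR)" if z: "z \<in> YY" for z
  proof (rule open_image_Euclid)
    show "\<forall>u\<in>RR. H u z \<in> RR" using Hmap z by blast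
    show "\<forall>u\<in>RR. \<forall>\<epsilon>>0. \<exists>\<delta>>0. \<forall>u'\<in>RR. ee u u' < \<delta> \<longrightarrow> ee (H u z) (H u' z) < \<epsilon>"
      using Hcont z by blast
    show "inj_on (\<lambda>u. H u z) RR" using Hinj z by (meson inj_onI)
  qed
  let ?T = "(\<lambda>u. H u y') ` RR"
  have eq: "RR - ?T = \<Union>{(\<lambda>u. H u z) ` RR | z. z \<in> YY \<and> G z = G y' \<and> z \<noteq> y'}"
  proof
    show "RR - ?T \<subseteq> \<Union>{(\<lambda>u. H u z) ` RR | z. z \<in> YY \<and> G z = G y' \<and> z \<noteq> y'}"
    proof
      fix v assume v: "v \<in> RR - ?T"
      have "(G y')(0:=v) \<in> PP" using pt_in Gmap y' v by blast
      then obtain p where p: "p \<in> PP" "F p = (G y')(0:=v)" using Fbij(2) by (metis imageE)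
      define z where "z = p(0:=(\<lambda>_. 0))"
      have zz: "z \<in> YY" "p 0 \<in> RR" "z(0 := p 0) = p" using decomp[OF p(1)] by (auto simp: z_def)
      have "(G z)(0 := H (p 0) z) = (G y')(0:=v)" using FGH'[OF zz(1,2)] zz(3) p(2) by simp
      then have "G z = G y' \<and> H (p 0) z = v" using pt_eq Gmap zz(1) y' by blast
      moreover have "z \<noteq> y'" using v calculation zz(2) by auto
      ultimately show "v \<in> \<Union>{(\<lambda>u. H u z) ` RR | z. z \<in> YY \<and> G z = G y' \<and> z \<noteq> y'}"
        using zz by blast
    qed
    show "\<Union>{(\<lambda>u. H u z) ` RR | z. z \<in> YY \<and> G z = G y' \<and> z \<noteq> y'} \<subseteq> RR - ?T"
    proof
      fix v assume "v \<in> \<Union>{(\<lambda>u. H u z) ` RR | z. z \<in> YY \<and> G z = G y' \<and> z \<noteq> y'}"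
      then obtain z u where zu: "z \<in> YY" "G z = G y'" "z \<noteq> y'" "u \<in> RR" "v = H u z" by blast
      have "v \<in> RR" using Hmap zu by blast
      moreover have "v \<notin> ?T"
      proof
        assume "v \<in> ?T"
        then obtain u' where u': "u' \<in> RR" "v = H u' y'" by blast
        have "F (z(0:=u)) = F (y'(0:=u'))" using FGH'[OF zu(1,4)] FGH'[OF y' u'(1)] zu u' by simp
        then have "z(0:=u) = y'(0:=u')" using Fbij(1) pt_in zu u' y' by (meson inj_onD)
        then show False using pt_eq zu y' by blast
      qed
      ultimately show "v \<in> RR - ?T" by blast
    qed
  qed
  have top: "topspace ?E = RR" by (rule Rsp_topspace)
  have "openin ?E (RR - ?T)" unfolding eq using opn by blast
  then have "closedin ?E ?T" unfolding closedin_def top using Hmap y' by blast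
  moreover have "openin ?E ?T" using opn[OF y'] .
  moreover have "?T \<noteq> {}" using m1 e0_Rsp by blast
  ultimately have "?T = RR"
    using connected_Euclidean_space[of "nn 0", unfolded connected_space_clopen_in] top by blast
  then have "w \<in> (\<lambda>u. H u y') ` RR" using w by simp
  then obtain x'' where "x'' \<in> RR" "w = H x'' y'" by (rule imageE)
  then show ?thesis by blast
qed

end



lemma ereal_div_scale:
  fixes X :: ereal and k \<rho> :: real
  assumes "k > 0" "\<rho> > 0"
  shows "ereal k * (X / ereal (k * \<rho>)) = X / ereal \<rho>"
  using assms by (cases X) (simp_all add: divide_ereal_def field_simps)

lemma ereal_mult_div_assoc:
  fixes X :: ereal and c \<rho> :: real
  shows "(ereal c * X) / ereal \<rho> = ereal c * (X / ereal \<rho>)"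
  by (simp add: divide_ereal_def mult.assoc)

lemma ev_pos: "eventually (\<lambda>\<rho>::real. \<rho> > 0) (at_right 0)"
  by (simp add: eventually_at_right_less)

lemma Liminf_rescale:
  fixes g :: "real \<Rightarrow> ereal" and k :: real
  assumes "k > 0"
  shows "Liminf (at_right 0) (\<lambda>\<rho>. g (k * \<rho>)) = Liminf (at_right 0) g"
proof -
  have "inj (times k)" using assms by (simp add: inj_on_def)
  then have "Liminf (filtermap (times k) (at_right 0)) g = Liminf (at_right 0) (\<lambda>\<rho>. g (k * \<rho>))"
    by (rule Liminf_filtermap_eq)
  moreover have "filtermap (times k) (at_right (0::real)) = at_right 0"
    using filtermap_times_pos_at_right[OF assms, of 0] by simp
  ultimately show ?thesis by simp
qed

lemma Limsup_rescale:
  fixes g :: "real \<Rightarrow> ereal" and k :: real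
  assumes "k > 0"
  shows "Limsup (at_right 0) (\<lambda>\<rho>. g (k * \<rho>)) = Limsup (at_right 0) g"
proof -
  have "inj (times k)" using assms by (simp add: inj_on_def)
  then have "Limsup (filtermap (times k) (at_right 0)) g = Limsup (at_right 0) (\<lambda>\<rho>. g (k * \<rho>))"
    by (rule Limsup_filtermap_eq)
  moreover have "filtermap (times k) (at_right (0::real)) = at_right 0"
    using filtermap_times_pos_at_right[OF assms, of 0] by simp
  ultimately show ?thesis by simp
qed

context setting
begin

lemma eta1: "\<eta> 1 > 0" by (rule eta_facts(6)[OF \<eta>])
lemma kappa: "\<eta>inv 1 > 0" by (rule eta_facts(4)[OF \<eta>])
lemma etak: "\<eta> (\<eta>inv 1) = 1" by (rule eta_facts(3)[OF \<eta>])
lemma etamono: "0 \<le> s \<Longrightarrow> s \<le> t \<Longrightarrow> \<eta> s \<le> \<eta> t" by (rule eta_facts(5)[OF \<eta>])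

lemma MS: "Metric_space PP DD" by (rule Dmet_metric[OF r1 \<alpha>pos \<alpha>mono])

lemma DD_pos: "p \<in> PP \<Longrightarrow> q \<in> PP \<Longrightarrow> p \<noteq> q \<Longrightarrow> DD p q > 0"
  using Metric_space.zero[OF MS, of p q] Metric_space.nonneg[OF MS, of p q] by linarith

lemma R1:
  assumes y: "y \<in> YY" and y': "y' \<in> YY" and x: "x \<in> RR" and x': "x' \<in> RR" and rho: "\<rho> > 0"
    and le1: "DY y y' \<le> \<rho>" and le2: "ee x x' \<ge> \<rho>"
  shows "DY (G y) (G y') \<le> \<eta> 1 * ee (H x y) (H x' y)"
proof (cases "y' = y")
  case True
  then have "DY (G y) (G y') = 0" by (simp add: DY_zero[OF r])
  then show ?thesis using eta1 ee_nonneg by simp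
next
  case False
  have xx: "x \<noteq> x'" using le2 rho by auto
  let ?p = "y(0:=x)" and ?q = "y(0:=x')" and ?s = "y'(0:=x)"
  have ne: "?p \<noteq> ?s" "?p \<noteq> ?q" "?s \<noteq> ?q"
    using pt_eq[OF y y'] pt_eq[OF y' y] False xx by (auto dest: fun_cong[of _ _ 0])
  have q: "DD (F ?p) (F ?s) / DD (F ?p) (F ?q) \<le> \<eta> (DD ?p ?s / DD ?p ?q)"
    by (rule qs) (use pt_in y y' x x' ne in auto)
  have b: "DD (F ?p) (F ?q) = ee (H x y) (H x' y)" by (rule DFpq[OF y x x'])
  have bpos: "ee (H x y) (H x' y) > 0"
    using ee_pos[of "H x y" "H x' y"] Hmap y x x' Hinj[OF y x x'] xx by auto
  have "DD ?p ?s / DD ?p ?q = DY y y' / ee x x'" using Dps[OF y y'] Dpq by simp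
  moreover have "DY y y' / ee x x' \<le> 1" using le1 le2 rho by (simp add: divide_le_eq)
  moreover have "0 \<le> DY y y' / ee x x'" using DY_nonneg[OF r] ee_nonneg by simp
  ultimately have "\<eta> (DD ?p ?s / DD ?p ?q) \<le> \<eta> 1" using etamono by simp
  with q b have "DD (F ?p) (F ?s) / ee (H x y) (H x' y) \<le> \<eta> 1" by simp
  then have "DD (F ?p) (F ?s) \<le> \<eta> 1 * ee (H x y) (H x' y)" using bpos by (simp add: divide_le_eq)
  moreover have "DY (G y) (G y') \<le> DD (F ?p) (F ?s)" by (rule DFps[OF y y' x x])
  ultimately show ?thesis by linarith
qed

lemma R2:
  assumes y: "y \<in> YY" and y': "y' \<in> YY" and x: "x \<in> RR" and x': "x' \<in> RR" and rho: "\<rho> > 0"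
    and le1: "DY y y' \<ge> \<rho>" and le2: "ee x x' \<le> \<eta>inv 1 * \<rho>"
  shows "ee (H x y) (H x' y) \<le> DY (G y) (G y')"
proof (cases "x' = x")
  case True
  then show ?thesis using DY_nonneg[OF r] by simp
next
  case False
  have yy: "y \<noteq> y'" using le1 rho DY_zero[OF r, of y y' nn \<alpha>] by auto
  obtain x'' where x'': "x'' \<in> RR" "H x'' y' = H x y" using Hsurj[OF y'] Hmap y x by blast
  let ?p = "y(0:=x)" and ?q = "y(0:=x')" and ?s = "y'(0:=x'')"
  have ne: "?p \<noteq> ?q" "?p \<noteq> ?s" "?q \<noteq> ?s"
    using pt_eq[OF y y'] False yy by (auto dest: fun_cong[of _ _ 0])
  have q: "DD (F ?p) (F ?q) / DD (F ?p) (F ?s) \<le> \<eta> (DD ?p ?q / DD ?p ?s)"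
    by (rule qs) (use pt_in y y' x x' x'' ne in auto)
  have b: "DD (F ?p) (F ?q) = ee (H x y) (H x' y)" by (rule DFpq[OF y x x'])
  have a: "DD (F ?p) (F ?s) = DY (G y) (G y')" by (rule DFps_eq[OF y y' x x''(1) x''(2)[symmetric]])
  have FF: "F ?p \<in> PP" "F ?s \<in> PP" using Fbij(2) pt_in y y' x x'' by blast+
  have "F ?p \<noteq> F ?s" using Fbij(1) pt_in y y' x x'' ne by (meson inj_onD)
  then have apos: "DY (G y) (G y') > 0" using DD_pos[OF FF] a by simp
  have dps: "DD ?p ?s \<ge> \<rho>" using DYle[of y y' x x''] le1 by linarith
  have "DD ?p ?q / DD ?p ?s \<le> \<eta>inv 1"
  proof -
    have "DD ?p ?q = ee x x'" by (rule Dpq)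
    also have "\<dots> \<le> \<eta>inv 1 * \<rho>" by (rule le2)
    also have "\<dots> \<le> \<eta>inv 1 * DD ?p ?s" using dps kappa by simp
    finally show ?thesis using dps rho by (simp add: divide_le_eq)
  qed
  moreover have "0 \<le> DD ?p ?q / DD ?p ?s" using Metric_space.nonneg[OF MS] by simp
  ultimately have "\<eta> (DD ?p ?q / DD ?p ?s) \<le> 1" using etamono etak by metis
  with q a b have "ee (H x y) (H x' y) / DY (G y) (G y') \<le> 1" by simp
  then show ?thesis using apos by (simp add: divide_le_eq)
qed

end



context setting
begin

abbreviation "LG y \<equiv> Lrad YY DY DY G y"
abbreviation "lG y \<equiv> lrad YY DY DY G y"
abbreviation "LH y x \<equiv> Lrad RR ee ee (\<lambda>x'. H x' y) x"
abbreviation "lH y x \<equiv> lrad RR ee ee (\<lambda>x'. H x' y) x"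

lemma S1:
  assumes y: "y \<in> YY" and x: "x \<in> RR" and rho: "\<rho> > 0"
  shows "LG y \<rho> \<le> ereal (\<eta> 1) * lH y x \<rho>"
  unfolding Lrad_def
proof (rule Sup_least)
  fix a assume "a \<in> {ereal (DY (G y) (G y')) | y'. y' \<in> YY \<and> DY y y' \<le> \<rho>}"
  then obtain y' where y': "y' \<in> YY" "DY y y' \<le> \<rho>" "a = ereal (DY (G y) (G y'))" by blast
  have "ereal (DY (G y) (G y') / \<eta> 1) \<le> lH y x \<rho>"
    unfolding lrad_def
  proof (rule Inf_greatest)
    fix b assume "b \<in> {ereal (ee (H x y) (H x' y)) | x'. x' \<in> RR \<and> ee x x' \<ge> \<rho>}"
    then obtain x' where x': "x' \<in> RR" "ee x x' \<ge> \<rho>" "b = ereal (ee (H x y) (H x' y))" by blast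
    have "DY (G y) (G y') \<le> \<eta> 1 * ee (H x y) (H x' y)" by (rule R1[OF y y'(1) x x'(1) rho y'(2) x'(2)])
    then show "ereal (DY (G y) (G y') / \<eta> 1) \<le> b" using x'(3) eta1 by (simp add: divide_le_eq mult.commute)
  qed
  then have "ereal (\<eta> 1) * ereal (DY (G y) (G y') / \<eta> 1) \<le> ereal (\<eta> 1) * lH y x \<rho>"
    using eta1 by (intro ereal_mult_left_mono) auto
  then show "a \<le> ereal (\<eta> 1) * lH y x \<rho>" using y'(3) eta1 by simp
qed

lemma S2:
  assumes y: "y \<in> YY" and x: "x \<in> RR" and rho: "\<rho> > 0"
  shows "LH y x (\<eta>inv 1 * \<rho>) \<le> lG y \<rho>"
  unfolding Lrad_def
proof (rule Sup_least)
  fix a assume "a \<in> {ereal (ee (H x y) (H x' y)) | x'. x' \<in> RR \<and> ee x x' \<le> \<eta>inv 1 * \<rho>}"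
  then obtain x' where x': "x' \<in> RR" "ee x x' \<le> \<eta>inv 1 * \<rho>" "a = ereal (ee (H x y) (H x' y))" by blast
  show "a \<le> lG y \<rho>"
    unfolding lrad_def
  proof (rule Inf_greatest)
    fix b assume "b \<in> {ereal (DY (G y) (G y')) | y'. y' \<in> YY \<and> DY y y' \<ge> \<rho>}"
    then obtain y' where y': "y' \<in> YY" "DY y y' \<ge> \<rho>" "b = ereal (DY (G y) (G y'))" by blast
    show "a \<le> b" using R2[OF y y'(1) x x'(1) rho y'(2) x'(2)] x'(3) y'(3) by simp
  qed
qed

lemma S3:
  assumes y: "y \<in> YY" and rho: "\<rho> \<ge> 0"
  shows "lG y \<rho> \<le> LG y \<rho>"
proof -
  obtain y' where y': "y' \<in> YY" "DY y y' = \<rho>" using exact_Y[OF r nn \<alpha>pos a1 y rho] by blast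
  have "lG y \<rho> \<le> ereal (DY (G y) (G y'))" unfolding lrad_def
    by (rule Inf_lower) (use y' in auto)
  also have "\<dots> \<le> LG y \<rho>" unfolding Lrad_def
    by (rule Sup_upper) (use y' in auto)
  finally show ?thesis .
qed

lemma S4:
  assumes x: "x \<in> RR" and rho: "\<rho> \<ge> 0"
  shows "lH y x \<rho> \<le> LH y x \<rho>"
proof -
  obtain x' where x': "x' \<in> RR" "ee x x' = \<rho>" using exact_R[OF m1 x rho] by blast
  have "lH y x \<rho> \<le> ereal (ee (H x y) (H x' y))" unfolding lrad_def
    by (rule Inf_lower) (use x' in auto)
  also have "\<dots> \<le> LH y x \<rho>" unfolding Lrad_def
    by (rule Sup_upper) (use x' in auto)
  finally show ?thesis .
qed

lemma main:
  "\<forall>y\<in>YSp r nn. \<forall>x\<in>Rsp (nn 0).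
     (\<forall>\<rho>>0. Lrad (YSp r nn) (DYmet r nn \<alpha>) (DYmet r nn \<alpha>) G y \<rho>
              \<le> ereal (\<eta> 1) * lrad (Rsp (nn 0)) (edist (nn 0)) (edist (nn 0)) (\<lambda>x'. H x' y) x \<rho>)
   \<and> ereal (\<eta>inv 1) * lpt (Rsp (nn 0)) (edist (nn 0)) (edist (nn 0)) (\<lambda>x'. H x' y) x
       \<le> lpt (YSp r nn) (DYmet r nn \<alpha>) (DYmet r nn \<alpha>) G y
   \<and> lpt (YSp r nn) (DYmet r nn \<alpha>) (DYmet r nn \<alpha>) G y
       \<le> ereal (\<eta> 1) * lpt (Rsp (nn 0)) (edist (nn 0)) (edist (nn 0)) (\<lambda>x'. H x' y) x
   \<and> ereal (\<eta>inv 1) * Lpt (Rsp (nn 0)) (edist (nn 0)) (edist (nn 0)) (\<lambda>x'. H x' y) x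
       \<le> Lpt (YSp r nn) (DYmet r nn \<alpha>) (DYmet r nn \<alpha>) G y
   \<and> Lpt (YSp r nn) (DYmet r nn \<alpha>) (DYmet r nn \<alpha>) G y
       \<le> ereal (\<eta> 1) * Lpt (Rsp (nn 0)) (edist (nn 0)) (edist (nn 0)) (\<lambda>x'. H x' y) x"
proof (intro ballI conjI allI impI)
  fix y x assume y: "y \<in> YY" and x: "x \<in> RR"
  let ?k = "\<eta>inv 1"
  have k: "?k > 0" by (rule kappa)
  have e1: "\<eta> 1 \<ge> 0" using eta1 by simp
  show "\<And>\<rho>. \<rho> > 0 \<Longrightarrow> LG y \<rho> \<le> ereal (\<eta> 1) * lH y x \<rho>" using S1 y x by blast
  have ev2l: "eventually (\<lambda>\<rho>. ereal ?k * (lH y x (?k * \<rho>) / ereal (?k * \<rho>)) \<le> lG y \<rho> / ereal \<rho>) (at_right 0)"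
    using ev_pos
  proof (rule eventually_mono)
    fix \<rho> :: real assume rho: "\<rho> > 0"
    have "lH y x (?k * \<rho>) \<le> lG y \<rho>"
      using S4[OF x, of "?k * \<rho>"] S2[OF y x rho] k rho by (meson order.trans less_imp_le mult_pos_pos)
    then have "lH y x (?k * \<rho>) / ereal \<rho> \<le> lG y \<rho> / ereal \<rho>" using rho by simp
    then show "ereal ?k * (lH y x (?k * \<rho>) / ereal (?k * \<rho>)) \<le> lG y \<rho> / ereal \<rho>"
      using ereal_div_scale[OF k rho] by simp
  qed
  have "ereal ?k * lpt RR ee ee (\<lambda>x'. H x' y) x
      = ereal ?k * Liminf (at_right 0) (\<lambda>\<rho>. lH y x (?k * \<rho>) / ereal (?k * \<rho>))"
    unfolding lpt_def using Liminf_rescale[OF k, of "\<lambda>s. lH y x s / ereal s"] by simp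
  also have "\<dots> = Liminf (at_right 0) (\<lambda>\<rho>. ereal ?k * (lH y x (?k * \<rho>) / ereal (?k * \<rho>)))"
    using k by (intro Liminf_ereal_mult_left[symmetric]) auto
  also have "\<dots> \<le> lpt YY DY DY G y" unfolding lpt_def by (rule Liminf_mono[OF ev2l])
  finally show "ereal ?k * lpt RR ee ee (\<lambda>x'. H x' y) x \<le> lpt YY DY DY G y" .
  have ev2u: "eventually (\<lambda>\<rho>. lG y \<rho> / ereal \<rho> \<le> ereal (\<eta> 1) * (lH y x \<rho> / ereal \<rho>)) (at_right 0)"
    using ev_pos
  proof (rule eventually_mono)
    fix \<rho> :: real assume rho: "\<rho> > 0"
    have "lG y \<rho> \<le> ereal (\<eta> 1) * lH y x \<rho>"
      using S3[OF y, of \<rho>] S1[OF y x rho] rho by simp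
    then have "lG y \<rho> / ereal \<rho> \<le> (ereal (\<eta> 1) * lH y x \<rho>) / ereal \<rho>" using rho by simp
    then show "lG y \<rho> / ereal \<rho> \<le> ereal (\<eta> 1) * (lH y x \<rho> / ereal \<rho>)"
      by (simp add: ereal_mult_div_assoc)
  qed
  have "lpt YY DY DY G y \<le> Liminf (at_right 0) (\<lambda>\<rho>. ereal (\<eta> 1) * (lH y x \<rho> / ereal \<rho>))"
    unfolding lpt_def by (rule Liminf_mono[OF ev2u])
  also have "\<dots> = ereal (\<eta> 1) * lpt RR ee ee (\<lambda>x'. H x' y) x"
    unfolding lpt_def using e1 by (intro Liminf_ereal_mult_left) auto
  finally show "lpt YY DY DY G y \<le> ereal (\<eta> 1) * lpt RR ee ee (\<lambda>x'. H x' y) x" .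
  have ev3l: "eventually (\<lambda>\<rho>. ereal ?k * (LH y x (?k * \<rho>) / ereal (?k * \<rho>)) \<le> LG y \<rho> / ereal \<rho>) (at_right 0)"
    using ev_pos
  proof (rule eventually_mono)
    fix \<rho> :: real assume rho: "\<rho> > 0"
    have "LH y x (?k * \<rho>) \<le> LG y \<rho>"
      using S2[OF y x rho] S3[OF y, of \<rho>] rho by simp
    then have "LH y x (?k * \<rho>) / ereal \<rho> \<le> LG y \<rho> / ereal \<rho>" using rho by simp
    then show "ereal ?k * (LH y x (?k * \<rho>) / ereal (?k * \<rho>)) \<le> LG y \<rho> / ereal \<rho>"
      using ereal_div_scale[OF k rho] by simp
  qed
  have "ereal ?k * Lpt RR ee ee (\<lambda>x'. H x' y) x
      = ereal ?k * Limsup (at_right 0) (\<lambda>\<rho>. LH y x (?k * \<rho>) / ereal (?k * \<rho>))"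
    unfolding Lpt_def using Limsup_rescale[OF k, of "\<lambda>s. LH y x s / ereal s"] by simp
  also have "\<dots> = Limsup (at_right 0) (\<lambda>\<rho>. ereal ?k * (LH y x (?k * \<rho>) / ereal (?k * \<rho>)))"
    using k by (intro Limsup_ereal_mult_left[symmetric]) auto
  also have "\<dots> \<le> Lpt YY DY DY G y" unfolding Lpt_def by (rule Limsup_mono[OF ev3l])
  finally show "ereal ?k * Lpt RR ee ee (\<lambda>x'. H x' y) x \<le> Lpt YY DY DY G y" .
  have ev3u: "eventually (\<lambda>\<rho>. LG y \<rho> / ereal \<rho> \<le> ereal (\<eta> 1) * (LH y x \<rho> / ereal \<rho>)) (at_right 0)"
    using ev_pos
  proof (rule eventually_mono)
    fix \<rho> :: real assume rho: "\<rho> > 0"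
    have "lH y x \<rho> \<le> LH y x \<rho>" using S4[OF x, of \<rho>] rho by simp
    then have "ereal (\<eta> 1) * lH y x \<rho> \<le> ereal (\<eta> 1) * LH y x \<rho>"
      using e1 by (intro ereal_mult_left_mono) auto
    then have "LG y \<rho> \<le> ereal (\<eta> 1) * LH y x \<rho>"
      using S1[OF y x rho] by simp
    then have "LG y \<rho> / ereal \<rho> \<le> (ereal (\<eta> 1) * LH y x \<rho>) / ereal \<rho>" using rho by simp
    then show "LG y \<rho> / ereal \<rho> \<le> ereal (\<eta> 1) * (LH y x \<rho> / ereal \<rho>)"
      by (simp add: ereal_mult_div_assoc)
  qed
  have "Lpt YY DY DY G y \<le> Limsup (at_right 0) (\<lambda>\<rho>. ereal (\<eta> 1) * (LH y x \<rho> / ereal \<rho>))"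
    unfolding Lpt_def by (rule Limsup_mono[OF ev3u])
  also have "\<dots> = ereal (\<eta> 1) * Lpt RR ee ee (\<lambda>x'. H x' y) x"
    unfolding Lpt_def using e1 by (intro Limsup_ereal_mult_left) auto
  finally show "Lpt YY DY DY G y \<le> ereal (\<eta> 1) * Lpt RR ee ee (\<lambda>x'. H x' y) x" .
qed

end

theorem lemma4p3:
  fixes r :: nat and nn :: "nat \<Rightarrow> nat" and \<alpha> :: "nat \<Rightarrow> real"
    and \<eta> \<eta>inv :: "real \<Rightarrow> real"
    and F :: "(nat \<Rightarrow> nat \<Rightarrow> real) \<Rightarrow> (nat \<Rightarrow> nat \<Rightarrow> real)"
    and G :: "(nat \<Rightarrow> nat \<Rightarrow> real) \<Rightarrow> (nat \<Rightarrow> nat \<Rightarrow> real)"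
    and H :: "(nat \<Rightarrow> real) \<Rightarrow> (nat \<Rightarrow> nat \<Rightarrow> real) \<Rightarrow> (nat \<Rightarrow> real)"
  assumes r: "r \<ge> 2"
    and nn: "\<forall>i<r. nn i \<ge> 1"
    and \<alpha>pos: "0 < \<alpha> 0"
    and \<alpha>mono: "strict_mono_on {..<r} \<alpha>"
    and \<eta>: "homeomorphism {0..} {0..} \<eta> \<eta>inv"
    and Fhom: "homeomorphic_map (Metric_space.mtopology (PSp r nn) (Dmet r nn \<alpha>))
                                (Metric_space.mtopology (PSp r nn) (Dmet r nn \<alpha>)) F"
    and Fqs: "quasisymmetric_on (PSp r nn) (Dmet r nn \<alpha>) (Dmet r nn \<alpha>) \<eta> F"
    and Gmap: "\<forall>y\<in>YSp r nn. G y \<in> YSp r nn"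
    and Hmap: "\<forall>x\<in>Rsp (nn 0). \<forall>y\<in>YSp r nn. H x y \<in> Rsp (nn 0)"
    and FGH: "\<forall>x\<in>Rsp (nn 0). \<forall>y\<in>YSp r nn. F (y(0 := x)) = (G y)(0 := H x y)"
  shows "\<forall>y\<in>YSp r nn. \<forall>x\<in>Rsp (nn 0).
     (\<forall>\<rho>>0. Lrad (YSp r nn) (DYmet r nn \<alpha>) (DYmet r nn \<alpha>) G y \<rho>
              \<le> ereal (\<eta> 1) * lrad (Rsp (nn 0)) (edist (nn 0)) (edist (nn 0)) (\<lambda>x'. H x' y) x \<rho>)
   \<and> ereal (\<eta>inv 1) * lpt (Rsp (nn 0)) (edist (nn 0)) (edist (nn 0)) (\<lambda>x'. H x' y) x
       \<le> lpt (YSp r nn) (DYmet r nn \<alpha>) (DYmet r nn \<alpha>) G y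
   \<and> lpt (YSp r nn) (DYmet r nn \<alpha>) (DYmet r nn \<alpha>) G y
       \<le> ereal (\<eta> 1) * lpt (Rsp (nn 0)) (edist (nn 0)) (edist (nn 0)) (\<lambda>x'. H x' y) x
   \<and> ereal (\<eta>inv 1) * Lpt (Rsp (nn 0)) (edist (nn 0)) (edist (nn 0)) (\<lambda>x'. H x' y) x
       \<le> Lpt (YSp r nn) (DYmet r nn \<alpha>) (DYmet r nn \<alpha>) G y
   \<and> Lpt (YSp r nn) (DYmet r nn \<alpha>) (DYmet r nn \<alpha>) G y
       \<le> ereal (\<eta> 1) * Lpt (Rsp (nn 0)) (edist (nn 0)) (edist (nn 0)) (\<lambda>x'. H x' y) x"
proof -
  have "setting r nn \<alpha> \<eta> \<eta>inv F G H"
    unfolding setting_def using assms by blast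
  then show ?thesis by (rule setting.main)
qed

end
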